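(* Let $\Gamma$ be an abstract cache and $\varrho$ an abstract environment. If $\Gamma,\varrho\models e$ and $e\to_n e'$ (labelled evaluation at stage $n$), then $\Gamma,\varrho\models e'$.
   Context: **Labelled SLamJS.** Constants $k ::= \mathsf{undef}\mid\mathsf{null}\mid\mathsf{true}\mid\mathsf{false}\mid s\mid n$ ($s$ string, $n$ number); $x$ ranges over names, $\mathfrak m$ over markers, $\ell$ over a set $\mathrm{Label}$. Expressions are labelled terms $e ::= t^\ell$, with terms $t ::= k\mid\{s_1:e_1,\dots,s_j:e_j\}\mid x\mid\mathsf{fun}(x)\{e\}\mid e(e)\mid\mathsf{box}\,e\mid\mathsf{unbox}\,e\mid\mathsf{run}\,e\mid\mathsf{if}(e)\{e\}\mathsf{else}\{e\}\mid e[e]\mid e[e]=e\mid\mathsf{del}\,e[e]\mid(t,\rho)\mid\mathsf{run}\,e\,\mathsf{in}\,\rho\mid(\mathfrak m:e)$; environments $\rho$ map finitely many names to stage-0 values. $\mathrm{lbl}(t^\ell)=\ell$; for $e=t^\ell$, $e^{\ell'}$ means $t^{\ell'}$ and $(e,\rho)^{\ell'}$ means $(t,\rho)^{\ell'}$. Values are labelled expressions whose terms are: at stage 0 closures $(\mathsf{fun}(x)\{e\},\rho)$; at every stage $n$: constants, records of stage-$n$ values, $\mathsf{box}\,v^{n+1}$, $(\mathfrak m:v^n)$; at stages $n+1$ additionally $x$, $\mathsf{fun}(x)\{v^{n+1}\}$, $v^{n+1}(v^{n+1})$, $\mathsf{run}\,v^{n+1}$, $\mathsf{if}(v^{n+1})\{v^{n+1}\}\mathsf{else}\{v^{n+1}\}$,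 $v^{n+1}[v^{n+1}]$, $v^{n+1}[v^{n+1}]=v^{n+1}$, $\mathsf{del}\,v^{n+1}[v^{n+1}]$; at stages $n+2$ additionally $\mathsf{unbox}\,v^{n+1}$. $\pi$ denotes the string "__proto__". **Labelled top-level reduction** $\dashrightarrow_n$: Environment propagation: $(k,\rho)^\ell\dashrightarrow_n k^\ell$; $(\{\overline{s:t^\ell}\},\rho)^{\ell'}\dashrightarrow_n\{\overline{s:(t,\rho)^\ell}\}^{\ell'}$; $(x,\rho)^\ell\dashrightarrow_{n+1}x^\ell$; $(\mathsf{fun}(x)\{t^\ell\},\rho)^{\ell'}\dashrightarrow_{n+1}(\mathsf{fun}(x)\{(t,\rho)^\ell\})^{\ell'}$; $(t_1^{\ell_1}(t_2^{\ell_2}),\rho)^\ell\dashrightarrow_n((t_1,\rho)^{\ell_1}((t_2,\rho)^{\ell_2}))^\ell$; $(\mathsf{box}\,t^\ell,\rho)^{\ell'}\dashrightarrow_n(\mathsf{box}\,(t,\rho)^\ell)^{\ell'}$; same for $\mathsf{unbox}$; $(\mathsf{run}\,t^\ell,\rho)^{\ell'}\dashrightarrow_0(\mathsf{run}\,(t,\rho)^\ell\,\mathsf{in}\,\rho)^{\ell'}$; $(\mathsf{run}\,t^\ell,\rho)^{\ell'}\dashrightarrow_{n+1}(\mathsf{run}\,(t,\rho)^\ell)^{\ell'}$; for $\mathsf{if}$, $[\cdot]$, $[\cdot]=\cdot$, $\mathsf{del}$ and $(\mathfrak m:\cdot)$ the environment is pushed to every immediate subexpression $t_i^{\ell_i}\mapsto(t_i,\rho)^{\ell_i}$,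 keeping the outer label, at every stage $n$. Proper rules: (Lookup) $(x,\rho)^\ell\dashrightarrow_0 v^\ell$ where $\rho(x)=v$; (Apply) $((\mathsf{fun}(x)\{t^{\ell_1}\},\rho)^{\ell_2}(v))^{\ell_3}\dashrightarrow_0(t,\rho[x\mapsto v])^{\ell_1}$; (Unbox) $(\mathsf{unbox}\,(\mathsf{box}\,v^1)^{\ell_1})^{\ell_2}\dashrightarrow_1(v^1)^{\ell_2}$; (Run) $(\mathsf{run}\,(\mathsf{box}\,v^1)^{\ell_1}\,\mathsf{in}\,\rho)^{\ell_2}\dashrightarrow_0(v^1,\rho)^{\ell_2}$; (IfTrue/IfFalse) $(\mathsf{if}(\mathsf{true})\{t_1^{\ell_1}\}\mathsf{else}\{t_2^{\ell_2}\})^\ell\dashrightarrow_0 t_1^{\ell_1}$, and with $\mathsf{false}$ to $t_2^{\ell_2}$; (Read1) $(\{\overline{s:v},s_i:v_i,\overline{s:v}'\}^{\ell_1}[s_i^{\ell_2}])^{\ell_3}\dashrightarrow_0 v_i^{\ell_3}$; (Read2) $(\{\overline{s:v},\pi:\{\overline{s:v}'\}^{\ell_1'},\overline{s:v}''\}^{\ell_1}[s_x^{\ell_2}])^{\ell_3}\dashrightarrow_0(\{\overline{s:v}'\}^{\ell_1'}[s_x^{\ell_2}])^{\ell_3}$ if $s_x\notin\overline s\cup\overline s''$; (Read3) the same with $\pi:\mathsf{null}^{\ell_1'}$ reduces to $\mathsf{undef}^{\ell_3}$; (Write1) $(\{\overline{s:v},s_i:v_i,\overline{s:v}'\}^{\ell_1}[s_i^{\ell_2}]=v_i')^{\ell_3}\dashrightarrow_0\{\overline{s:v},s_i:v_i',\overline{s:v}'\}^{\ell_3}$;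 (Write2) $(\{\overline{s:v}\}^{\ell_1}[s_x^{\ell_2}]=v_x)^{\ell_3}\dashrightarrow_0\{\overline{s:v},s_x:v_x\}^{\ell_3}$ if $s_x\notin\overline s$; (Del1) $(\mathsf{del}\,\{\overline{s:v},s_i:v_i,\overline{s:v}'\}^{\ell_1}[s_i^{\ell_2}])^{\ell_3}\dashrightarrow_0\{\overline{s:v},\overline{s:v}'\}^{\ell_3}$; (Del2) $(\mathsf{del}\,\{\overline{s:v}\}^{\ell_1}[s_x^{\ell_2}])^{\ell_3}\dashrightarrow_0\{\overline{s:v}\}^{\ell_3}$ if $s_x\notin\overline s$. Lifts: $(((\mathfrak m:t^{\ell_1}),\rho)^{\ell_2}(v))^{\ell_3}\dashrightarrow_0(\mathfrak m:((t,\rho)^{\ell_1}(v))^{\ell_3})^{\ell_3}$; $(\mathsf{if}((\mathfrak m:v)^{\ell_0})\{t_1^{\ell_1}\}\mathsf{else}\{t_2^{\ell_2}\})^\ell\dashrightarrow_0(\mathfrak m:(\mathsf{if}(v)\{t_1^{\ell_1}\}\mathsf{else}\{t_2^{\ell_2}\})^\ell)^\ell$; $(\mathsf{unbox}\,(\mathfrak m:v)^{\ell_1})^{\ell_2}\dashrightarrow_1(\mathfrak m:(\mathsf{unbox}\,v)^{\ell_2})^{\ell_2}$; and at stage 0, for $\mathsf{run}\,\cdot\,\mathsf{in}\,\rho$, for the record and the selector of a read, of a write, and of a delete: an operand of the form $(\mathfrak m:v)^{\ell_1}$ in an expression with outer label $\ell_2$ yields $(\mathfrak m:(\text{same expression with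 }v\text{ in place of the operand})^{\ell_2})^{\ell_2}$. **Evaluation.** Contexts $C^m_n$ as for unlabelled SLamJS (hole at stage $n$ inside stage $m$: records, $\mathsf{fun}$ body at stage $\ge1$, function then argument, $\mathsf{box}$ body one stage up, $\mathsf{unbox}$ argument one stage down, $\mathsf{run}$, $\mathsf{if}$ condition, and at stages $\ge1$ the $\mathsf{if}$ branches, left-to-right in reads/writes/deletes, $\mathsf{run}\,\cdot\,\mathsf{in}\,\rho$, markers), each non-empty context layer carrying an outer label. $C\langle t_1^{\ell_1}\rangle\to_m C\langle t_2^{\ell_2}\rangle$ whenever $C\in\mathcal C^m_n$ and $t_1^{\ell_1}\dashrightarrow_n t_2^{\ell_2}$. **0CFA.** Abstract values $\nu ::= \mathtt{NULL}\mid\mathtt{UNDEF}\mid\mathtt{BOOL}\mid\mathtt{NUM}\mid\mathtt{STR}\mid\mathtt{FUN}(x,e)\mid\mathtt{BOX}(e)\mid\mathtt{REC}(\ell)$; abstract variables are names $x$ or $\ell.p$ ($p$ a field name). An abstract cache is $\Gamma:\mathrm{Label}\to\mathcal P(\mathrm{AbsVal})$, an abstract environment is $\varrho:\mathrm{AbsVar}\to\mathcal P(\mathrm{AbsVal})$. $\lceil k\rceil$ is $\mathtt{NULL},\mathtt{UNDEF},\mathtt{BOOL},\mathtt{NUM},\mathtt{STR}$ according to the kind of $k$. $\mathtt{proto}(\ell)_\varrho$ is the least set $P$ of labels with $\ell\in P$ and $\ell'\in P$ whenever $p\in P$ and $\mathtt{REC}(\ell')\in\varrho(p.\pi)$. The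 judgements $\Gamma,\varrho\models e$, $\Gamma,\varrho\models\rho$, $\Gamma,\varrho\models\nu\approx t$ are defined by mutual induction (writing $\models$ for $\Gamma,\varrho\models$): $\models k^\ell$ iff $\lceil k\rceil\in\Gamma(\ell)$; $\models x^\ell$ iff $\varrho(x)\subseteq\Gamma(\ell)$; $\models\{\overline{s:e}\}^\ell$ iff all $\models e_i$ and $\exists\mathtt{REC}(\ell')\in\Gamma(\ell).\forall i.\Gamma(\mathrm{lbl}(e_i))\subseteq\varrho(\ell'.s_i)$; $\models(\mathsf{fun}(x)\{e\})^\ell$ iff $\models e$ and $\exists\nu\in\Gamma(\ell).\models\nu\approx\mathsf{fun}(x)\{e\}$; $\models(t_1^{\ell_1}(t_2^{\ell_2}))^\ell$ iff $\models t_1^{\ell_1}$, $\models t_2^{\ell_2}$ and $\forall\mathtt{FUN}(x,t_3^{\ell_3})\in\Gamma(\ell_1).\Gamma(\ell_2)\subseteq\varrho(x)\wedge\Gamma(\ell_3)\subseteq\Gamma(\ell)$; $\models(\mathsf{box}\,e)^\ell$ iff $\models e$ and $\exists\nu\in\Gamma(\ell).\models\nu\approx\mathsf{box}\,e$; $\models(\mathsf{unbox}\,t^\ell)^{\ell_0}$ and $\models(\mathsf{run}\,t^\ell)^{\ell_0}$ iff $\models t^\ell$ and $\forall\mathtt{BOX}(t'^{\ell'})\in\Gamma(\ell).\Gamma(\ell')\subseteq\Gamma(\ell_0)$; $\models(\mathsf{run}\,t^\ell\,\mathsf{in}\,\rho)^{\ell_0}$ iff additionally $\models\rho$; $\models(\mathsf{if}(t_1^{\ell_1})\{t_2^{\ell_2}\}\mathsf{else}\{t_3^{\ell_3}\})^{\ell_4}$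 iff all three hold and $\Gamma(\ell_2)\cup\Gamma(\ell_3)\subseteq\Gamma(\ell_4)$; $\models(t,\rho)^\ell$ iff $\models t^\ell$ and $\models\rho$; $\models(t_1^{\ell_1}[t_2^{\ell_2}])^\ell$ iff both hold, $\forall\mathtt{REC}(\ell')\in\Gamma(\ell_1).\forall s.\forall\ell''\in\mathtt{proto}(\ell')_\varrho.\varrho(\ell''.s)\subseteq\Gamma(\ell)$, and $\mathtt{UNDEF}\in\Gamma(\ell)$; $\models(t_1^{\ell_1}[t_2^{\ell_2}]=t_3^{\ell_3})^\ell$ iff all three hold, $\forall s.\forall\mathtt{REC}(\ell')\in\Gamma(\ell_1).\Gamma(\ell_3)\subseteq\varrho(\ell'.s)$, and $\Gamma(\ell_1)\subseteq\Gamma(\ell)$; $\models(\mathsf{del}\,t_1^{\ell_1}[t_2^{\ell_2}])^\ell$ iff both hold and $\Gamma(\ell_1)\subseteq\Gamma(\ell)$; $\models(\mathfrak m:t_1^{\ell_1})^\ell$ iff $\models t_1^{\ell_1}$ and $\Gamma(\ell_1)\subseteq\Gamma(\ell)$. $\models\rho$ iff $\forall x\in\mathrm{dom}(\rho).\models\rho(x)\wedge\Gamma(\mathrm{lbl}(\rho(x)))\subseteq\varrho(x)$. Approximation: $\models\lceil k\rceil\approx k$; $\models\mathtt{FUN}(x,e)\approx\mathsf{fun}(x)\{e\}$; $\models\mathtt{BOX}(e)\approx\mathsf{box}\,e$; $\models\mathtt{REC}(\ell')\approx\{\overline{s:t^\ell}\}$ if $\forall i.\exists\nu_i\in\varrho(\ell'.s_i).\models\nu_i\approx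 t_i$; $\models\nu\approx t'$ if $\models\nu\approx t$ and $t^\ell\to_n t'^\ell$; $\models\nu\approx(t,\rho)$ if $\models\nu\approx t$ and $\models\rho$. *)

theory Defs
  imports Complex_Main "HOL-Library.Finite_Map"
begin

type_synonym name = string

datatype const = CUndef | CNull | CTrue | CFalse | CStr string | CNum real

datatype ('l, 'm) trm =
    Const const
  | Rec "(string \<times> ('l, 'm) expr) list"
  | Var name
  | Fun name "('l, 'm) expr"
  | App "('l, 'm) expr" "('l, 'm) expr"
  | Box "('l, 'm) expr"
  | Unbox "('l, 'm) expr"
  | Run "('l, 'm) expr"
  | If "('l, 'm) expr" "('l, 'm) expr" "('l, 'm) expr"
  | Read "('l, 'm) expr" "('l, 'm) expr"
  | Write "('l, 'm) expr" "('l, 'm) expr" "('l, 'm) expr"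
  | Del "('l, 'm) expr" "('l, 'm) expr"
  | Clo "('l, 'm) trm" "(name, ('l, 'm) expr) fmap"
  | RunIn "('l, 'm) expr" "(name, ('l, 'm) expr) fmap"
  | Mark 'm "('l, 'm) expr"
and ('l, 'm) expr = L "('l, 'm) trm" 'l

type_synonym ('l, 'm) env = "(name, ('l, 'm) expr) fmap"

fun lbl :: "('l, 'm) expr \<Rightarrow> 'l" where
  "lbl (L t l) = l"

fun trm_of :: "('l, 'm) expr \<Rightarrow> ('l, 'm) trm" where
  "trm_of (L t l) = t"

fun relabel :: "('l, 'm) expr \<Rightarrow> 'l \<Rightarrow> ('l, 'm) expr" where
  "relabel (L t l) l' = L t l'"

fun clo :: "('l, 'm) env \<Rightarrow> ('l, 'm) expr \<Rightarrow> ('l, 'm) expr" where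
  "clo \<rho> (L t l) = L (Clo t \<rho>) l"

definition proto_str :: string where "proto_str = ''__proto__''"

definition fields :: "(string \<times> ('l, 'm) expr) list \<Rightarrow> string set" where
  "fields fs = fst ` set fs"

inductive is_val :: "nat \<Rightarrow> ('l, 'm) expr \<Rightarrow> bool" where
  v_clo:   "is_val 0 (L (Clo (Fun x e) \<rho>) l)"
| v_const: "is_val n (L (Const k) l)"
| v_rec:   "(\<forall>p\<in>set fs. is_val n (snd p)) \<Longrightarrow> is_val n (L (Rec fs) l)"
| v_box:   "is_val (Suc n) v \<Longrightarrow> is_val n (L (Box v) l)"
| v_mark:  "is_val n v \<Longrightarrow> is_val n (L (Mark m v) l)"
| v_var:   "is_val (Suc n) (L (Var x) l)"
| v_fun:   "is_val (Suc n) v \<Longrightarrow> is_val (Suc n) (L (Fun x v) l)"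
| v_app:   "is_val (Suc n) v1 \<Longrightarrow> is_val (Suc n) v2 \<Longrightarrow> is_val (Suc n) (L (App v1 v2) l)"
| v_run:   "is_val (Suc n) v \<Longrightarrow> is_val (Suc n) (L (Run v) l)"
| v_if:    "is_val (Suc n) v1 \<Longrightarrow> is_val (Suc n) v2 \<Longrightarrow> is_val (Suc n) v3 \<Longrightarrow>
            is_val (Suc n) (L (If v1 v2 v3) l)"
| v_read:  "is_val (Suc n) v1 \<Longrightarrow> is_val (Suc n) v2 \<Longrightarrow> is_val (Suc n) (L (Read v1 v2) l)"
| v_write: "is_val (Suc n) v1 \<Longrightarrow> is_val (Suc n) v2 \<Longrightarrow> is_val (Suc n) v3 \<Longrightarrow>
            is_val (Suc n) (L (Write v1 v2 v3) l)"
| v_del:   "is_val (Suc n) v1 \<Longrightarrow> is_val (Suc n) v2 \<Longrightarrow> is_val (Suc n) (L (Del v1 v2) l)"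
| v_unbox: "is_val (Suc n) v \<Longrightarrow> is_val (Suc (Suc n)) (L (Unbox v) l)"

inductive tl_red :: "nat \<Rightarrow> ('l, 'm) expr \<Rightarrow> ('l, 'm) expr \<Rightarrow> bool" where
  ep_const: "tl_red n (L (Clo (Const k) \<rho>) l) (L (Const k) l)"
| ep_rec:   "tl_red n (L (Clo (Rec fs) \<rho>) l') (L (Rec (map (\<lambda>(s, e). (s, clo \<rho> e)) fs)) l')"
| ep_var:   "tl_red (Suc n) (L (Clo (Var x) \<rho>) l) (L (Var x) l)"
| ep_fun:   "tl_red (Suc n) (L (Clo (Fun x e) \<rho>) l') (L (Fun x (clo \<rho> e)) l')"
| ep_app:   "tl_red n (L (Clo (App e1 e2) \<rho>) l) (L (App (clo \<rho> e1) (clo \<rho> e2)) l)"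
| ep_box:   "tl_red n (L (Clo (Box e) \<rho>) l') (L (Box (clo \<rho> e)) l')"
| ep_unbox: "tl_red n (L (Clo (Unbox e) \<rho>) l') (L (Unbox (clo \<rho> e)) l')"
| ep_run0:  "tl_red 0 (L (Clo (Run e) \<rho>) l') (L (RunIn (clo \<rho> e) \<rho>) l')"
| ep_runS:  "tl_red (Suc n) (L (Clo (Run e) \<rho>) l') (L (Run (clo \<rho> e)) l')"
| ep_if:    "tl_red n (L (Clo (If e1 e2 e3) \<rho>) l) (L (If (clo \<rho> e1) (clo \<rho> e2) (clo \<rho> e3)) l)"
| ep_read:  "tl_red n (L (Clo (Read e1 e2) \<rho>) l) (L (Read (clo \<rho> e1) (clo \<rho> e2)) l)"
| ep_write: "tl_red n (L (Clo (Write e1 e2 e3) \<rho>) l)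
                      (L (Write (clo \<rho> e1) (clo \<rho> e2) (clo \<rho> e3)) l)"
| ep_del:   "tl_red n (L (Clo (Del e1 e2) \<rho>) l) (L (Del (clo \<rho> e1) (clo \<rho> e2)) l)"
| ep_mark:  "tl_red n (L (Clo (Mark m e) \<rho>) l) (L (Mark m (clo \<rho> e)) l)"
| lookup_rule:"fmlookup \<rho> x = Some v \<Longrightarrow> is_val 0 v \<Longrightarrow>
             tl_red 0 (L (Clo (Var x) \<rho>) l) (relabel v l)"
| app_rule:  "is_val 0 v \<Longrightarrow>
             tl_red 0 (L (App (L (Clo (Fun x (L t l1)) \<rho>) l2) v) l3) (L (Clo t (fmupd x v \<rho>)) l1)"
| unbox_rule:"is_val 1 v \<Longrightarrow> tl_red 1 (L (Unbox (L (Box v) l1)) l2) (relabel v l2)"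
| run_rule:"is_val 1 v \<Longrightarrow> tl_red 0 (L (RunIn (L (Box v) l1) \<rho>) l2) (L (Clo (trm_of v) \<rho>) l2)"
| if_true:  "tl_red 0 (L (If (L (Const CTrue) l0) (L t1 l1) (L t2 l2)) l) (L t1 l1)"
| if_false: "tl_red 0 (L (If (L (Const CFalse) l0) (L t1 l1) (L t2 l2)) l) (L t2 l2)"
| read1:    "is_val 0 (L (Rec (fs1 @ [(si, vi)] @ fs2)) l1) \<Longrightarrow>
             tl_red 0 (L (Read (L (Rec (fs1 @ [(si, vi)] @ fs2)) l1) (L (Const (CStr si)) l2)) l3)
                      (relabel vi l3)"
| read2:    "is_val 0 (L (Rec (fs1 @ [(proto_str, L (Rec fs') l1')] @ fs2)) l1) \<Longrightarrow>
             sx \<notin> fields fs1 \<union> fields fs2 \<Longrightarrow>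
             tl_red 0 (L (Read (L (Rec (fs1 @ [(proto_str, L (Rec fs') l1')] @ fs2)) l1)
                                (L (Const (CStr sx)) l2)) l3)
                      (L (Read (L (Rec fs') l1') (L (Const (CStr sx)) l2)) l3)"
| read3:    "is_val 0 (L (Rec (fs1 @ [(proto_str, L (Const CNull) l1')] @ fs2)) l1) \<Longrightarrow>
             sx \<notin> fields fs1 \<union> fields fs2 \<Longrightarrow>
             tl_red 0 (L (Read (L (Rec (fs1 @ [(proto_str, L (Const CNull) l1')] @ fs2)) l1)
                                (L (Const (CStr sx)) l2)) l3)
                      (L (Const CUndef) l3)"
| write1:   "is_val 0 (L (Rec (fs1 @ [(si, vi)] @ fs2)) l1) \<Longrightarrow> is_val 0 vi' \<Longrightarrow>
             tl_red 0 (L (Write (L (Rec (fs1 @ [(si, vi)] @ fs2)) l1) (L (Const (CStr si)) l2) vi') l3)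
                      (L (Rec (fs1 @ [(si, vi')] @ fs2)) l3)"
| write2:   "is_val 0 (L (Rec fs) l1) \<Longrightarrow> is_val 0 vx \<Longrightarrow> sx \<notin> fields fs \<Longrightarrow>
             tl_red 0 (L (Write (L (Rec fs) l1) (L (Const (CStr sx)) l2) vx) l3)
                      (L (Rec (fs @ [(sx, vx)])) l3)"
| del1:     "is_val 0 (L (Rec (fs1 @ [(si, vi)] @ fs2)) l1) \<Longrightarrow>
             tl_red 0 (L (Del (L (Rec (fs1 @ [(si, vi)] @ fs2)) l1) (L (Const (CStr si)) l2)) l3)
                      (L (Rec (fs1 @ fs2)) l3)"
| del2:     "is_val 0 (L (Rec fs) l1) \<Longrightarrow> sx \<notin> fields fs \<Longrightarrow>
             tl_red 0 (L (Del (L (Rec fs) l1) (L (Const (CStr sx)) l2)) l3) (L (Rec fs) l3)"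
| lift_app: "is_val 0 v \<Longrightarrow>
             tl_red 0 (L (App (L (Clo (Mark m (L t l1)) \<rho>) l2) v) l3)
                      (L (Mark m (L (App (L (Clo t \<rho>) l1) v) l3)) l3)"
| lift_if:  "is_val 0 v \<Longrightarrow>
             tl_red 0 (L (If (L (Mark m v) l0) (L t1 l1) (L t2 l2)) l)
                      (L (Mark m (L (If v (L t1 l1) (L t2 l2)) l)) l)"
| lift_unbox: "is_val 0 v \<Longrightarrow>
             tl_red 1 (L (Unbox (L (Mark m v) l1)) l2) (L (Mark m (L (Unbox v) l2)) l2)"
| lift_run: "is_val 0 v \<Longrightarrow>
             tl_red 0 (L (RunIn (L (Mark m v) l1) \<rho>) l2) (L (Mark m (L (RunIn v \<rho>) l2)) l2)"
| lift_read1: "is_val 0 v \<Longrightarrow>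
             tl_red 0 (L (Read (L (Mark m v) l1) e2) l2) (L (Mark m (L (Read v e2) l2)) l2)"
| lift_read2: "is_val 0 v \<Longrightarrow>
             tl_red 0 (L (Read e1 (L (Mark m v) l1)) l2) (L (Mark m (L (Read e1 v) l2)) l2)"
| lift_write1: "is_val 0 v \<Longrightarrow>
             tl_red 0 (L (Write (L (Mark m v) l1) e2 e3) l2) (L (Mark m (L (Write v e2 e3) l2)) l2)"
| lift_write2: "is_val 0 v \<Longrightarrow>
             tl_red 0 (L (Write e1 (L (Mark m v) l1) e3) l2) (L (Mark m (L (Write e1 v e3) l2)) l2)"
| lift_del1: "is_val 0 v \<Longrightarrow>
             tl_red 0 (L (Del (L (Mark m v) l1) e2) l2) (L (Mark m (L (Del v e2) l2)) l2)"
| lift_del2: "is_val 0 v \<Longrightarrow>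
             tl_red 0 (L (Del e1 (L (Mark m v) l1)) l2) (L (Mark m (L (Del e1 v) l2)) l2)"

text \<open>ctx_red m n e e': e = C<t1^l1>, e' = C<t2^l2> for a context C in C^m_n
  (hole at stage n inside stage m) with t1^l1 \<dashrightarrow>_n t2^l2.\<close>

inductive ctx_red :: "nat \<Rightarrow> nat \<Rightarrow> ('l, 'm) expr \<Rightarrow> ('l, 'm) expr \<Rightarrow> bool" where
  c_hole:   "tl_red n e e' \<Longrightarrow> ctx_red n n e e'"
| c_rec:    "\<forall>p\<in>set vs. is_val m (snd p) \<Longrightarrow> ctx_red m n e e' \<Longrightarrow>
             ctx_red m n (L (Rec (vs @ [(s, e)] @ es)) l) (L (Rec (vs @ [(s, e')] @ es)) l)"
| c_fun:    "ctx_red (Suc m) n e e' \<Longrightarrow> ctx_red (Suc m) n (L (Fun x e) l) (L (Fun x e') l)"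
| c_app1:   "ctx_red m n e e' \<Longrightarrow> ctx_red m n (L (App e e2) l) (L (App e' e2) l)"
| c_app2:   "is_val m v \<Longrightarrow> ctx_red m n e e' \<Longrightarrow> ctx_red m n (L (App v e) l) (L (App v e') l)"
| c_box:    "ctx_red (Suc m) n e e' \<Longrightarrow> ctx_red m n (L (Box e) l) (L (Box e') l)"
| c_unbox:  "ctx_red m n e e' \<Longrightarrow> ctx_red (Suc m) n (L (Unbox e) l) (L (Unbox e') l)"
| c_run:    "ctx_red m n e e' \<Longrightarrow> ctx_red m n (L (Run e) l) (L (Run e') l)"
| c_if1:    "ctx_red m n e e' \<Longrightarrow> ctx_red m n (L (If e e2 e3) l) (L (If e' e2 e3) l)"
| c_if2:    "is_val (Suc m) v1 \<Longrightarrow> ctx_red (Suc m) n e e' \<Longrightarrow>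
             ctx_red (Suc m) n (L (If v1 e e3) l) (L (If v1 e' e3) l)"
| c_if3:    "is_val (Suc m) v1 \<Longrightarrow> is_val (Suc m) v2 \<Longrightarrow> ctx_red (Suc m) n e e' \<Longrightarrow>
             ctx_red (Suc m) n (L (If v1 v2 e) l) (L (If v1 v2 e') l)"
| c_read1:  "ctx_red m n e e' \<Longrightarrow> ctx_red m n (L (Read e e2) l) (L (Read e' e2) l)"
| c_read2:  "is_val m v \<Longrightarrow> ctx_red m n e e' \<Longrightarrow> ctx_red m n (L (Read v e) l) (L (Read v e') l)"
| c_write1: "ctx_red m n e e' \<Longrightarrow> ctx_red m n (L (Write e e2 e3) l) (L (Write e' e2 e3) l)"
| c_write2: "is_val m v1 \<Longrightarrow> ctx_red m n e e' \<Longrightarrow>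
             ctx_red m n (L (Write v1 e e3) l) (L (Write v1 e' e3) l)"
| c_write3: "is_val m v1 \<Longrightarrow> is_val m v2 \<Longrightarrow> ctx_red m n e e' \<Longrightarrow>
             ctx_red m n (L (Write v1 v2 e) l) (L (Write v1 v2 e') l)"
| c_del1:   "ctx_red m n e e' \<Longrightarrow> ctx_red m n (L (Del e e2) l) (L (Del e' e2) l)"
| c_del2:   "is_val m v \<Longrightarrow> ctx_red m n e e' \<Longrightarrow> ctx_red m n (L (Del v e) l) (L (Del v e') l)"
| c_runin:  "ctx_red m n e e' \<Longrightarrow> ctx_red m n (L (RunIn e \<rho>) l) (L (RunIn e' \<rho>) l)"
| c_mark:   "ctx_red m n e e' \<Longrightarrow> ctx_red m n (L (Mark mk e) l) (L (Mark mk e') l)"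

definition eval_step :: "nat \<Rightarrow> ('l, 'm) expr \<Rightarrow> ('l, 'm) expr \<Rightarrow> bool" where
  "eval_step m e e' \<longleftrightarrow> (\<exists>n. ctx_red m n e e')"

datatype ('l, 'm) absval =
    NULL | UNDEF | BOOL | NUM | STRV
  | FUN name "('l, 'm) expr"
  | BOX "('l, 'm) expr"
  | REC 'l

datatype 'l absvar = AVar name | AField 'l string

type_synonym ('l, 'm) cache = "'l \<Rightarrow> ('l, 'm) absval set"
type_synonym ('l, 'm) aenv = "'l absvar \<Rightarrow> ('l, 'm) absval set"

fun abs_const :: "const \<Rightarrow> ('l, 'm) absval" where
  "abs_const CNull = NULL"
| "abs_const CUndef = UNDEF"
| "abs_const CTrue = BOOL"
| "abs_const CFalse = BOOL"
| "abs_const (CNum r) = NUM"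
| "abs_const (CStr s) = STRV"

inductive_set proto :: "('l, 'm) aenv \<Rightarrow> 'l \<Rightarrow> 'l set" for R :: "('l, 'm) aenv" and l :: 'l where
  proto_self: "l \<in> proto R l"
| proto_step: "p \<in> proto R l \<Longrightarrow> REC l' \<in> R (AField p proto_str) \<Longrightarrow> l' \<in> proto R l"

inductive
  acc :: "('l, 'm) cache \<Rightarrow> ('l, 'm) aenv \<Rightarrow> ('l, 'm) expr \<Rightarrow> bool" and
  acc_env :: "('l, 'm) cache \<Rightarrow> ('l, 'm) aenv \<Rightarrow> ('l, 'm) env \<Rightarrow> bool" and
  approx :: "('l, 'm) cache \<Rightarrow> ('l, 'm) aenv \<Rightarrow> ('l, 'm) absval \<Rightarrow> ('l, 'm) trm \<Rightarrow> bool"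
  for \<Gamma> :: "('l, 'm) cache" and R :: "('l, 'm) aenv"
where
  acc_const: "abs_const k \<in> \<Gamma> l \<Longrightarrow> acc \<Gamma> R (L (Const k) l)"
| acc_var:   "R (AVar x) \<subseteq> \<Gamma> l \<Longrightarrow> acc \<Gamma> R (L (Var x) l)"
| acc_rec:   "\<forall>p\<in>set fs. acc \<Gamma> R (snd p) \<Longrightarrow> REC l' \<in> \<Gamma> l \<Longrightarrow>
              \<forall>p\<in>set fs. \<Gamma> (lbl (snd p)) \<subseteq> R (AField l' (fst p)) \<Longrightarrow>
              acc \<Gamma> R (L (Rec fs) l)"
| acc_fun:   "acc \<Gamma> R e \<Longrightarrow> \<nu> \<in> \<Gamma> l \<Longrightarrow> approx \<Gamma> R \<nu> (Fun x e) \<Longrightarrow>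
              acc \<Gamma> R (L (Fun x e) l)"
| acc_app:   "acc \<Gamma> R e1 \<Longrightarrow> acc \<Gamma> R e2 \<Longrightarrow>
              \<forall>x e3. FUN x e3 \<in> \<Gamma> (lbl e1) \<longrightarrow> \<Gamma> (lbl e2) \<subseteq> R (AVar x) \<and> \<Gamma> (lbl e3) \<subseteq> \<Gamma> l \<Longrightarrow>
              acc \<Gamma> R (L (App e1 e2) l)"
| acc_box:   "acc \<Gamma> R e \<Longrightarrow> \<nu> \<in> \<Gamma> l \<Longrightarrow> approx \<Gamma> R \<nu> (Box e) \<Longrightarrow>
              acc \<Gamma> R (L (Box e) l)"
| acc_unbox: "acc \<Gamma> R e \<Longrightarrow> \<forall>e'. BOX e' \<in> \<Gamma> (lbl e) \<longrightarrow> \<Gamma> (lbl e') \<subseteq> \<Gamma> l0 \<Longrightarrow>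
              acc \<Gamma> R (L (Unbox e) l0)"
| acc_run:   "acc \<Gamma> R e \<Longrightarrow> \<forall>e'. BOX e' \<in> \<Gamma> (lbl e) \<longrightarrow> \<Gamma> (lbl e') \<subseteq> \<Gamma> l0 \<Longrightarrow>
              acc \<Gamma> R (L (Run e) l0)"
| acc_runin: "acc \<Gamma> R e \<Longrightarrow> \<forall>e'. BOX e' \<in> \<Gamma> (lbl e) \<longrightarrow> \<Gamma> (lbl e') \<subseteq> \<Gamma> l0 \<Longrightarrow>
              acc_env \<Gamma> R \<rho> \<Longrightarrow> acc \<Gamma> R (L (RunIn e \<rho>) l0)"
| acc_if:    "acc \<Gamma> R e1 \<Longrightarrow> acc \<Gamma> R e2 \<Longrightarrow> acc \<Gamma> R e3 \<Longrightarrow>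
              \<Gamma> (lbl e2) \<union> \<Gamma> (lbl e3) \<subseteq> \<Gamma> l4 \<Longrightarrow> acc \<Gamma> R (L (If e1 e2 e3) l4)"
| acc_clo:   "acc \<Gamma> R (L t l) \<Longrightarrow> acc_env \<Gamma> R \<rho> \<Longrightarrow> acc \<Gamma> R (L (Clo t \<rho>) l)"
| acc_read:  "acc \<Gamma> R e1 \<Longrightarrow> acc \<Gamma> R e2 \<Longrightarrow>
              \<forall>l'. REC l' \<in> \<Gamma> (lbl e1) \<longrightarrow> (\<forall>s. \<forall>l''\<in>proto R l'. R (AField l'' s) \<subseteq> \<Gamma> l) \<Longrightarrow>
              UNDEF \<in> \<Gamma> l \<Longrightarrow> acc \<Gamma> R (L (Read e1 e2) l)"
| acc_write: "acc \<Gamma> R e1 \<Longrightarrow> acc \<Gamma> R e2 \<Longrightarrow> acc \<Gamma> R e3 \<Longrightarrow>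
              \<forall>s l'. REC l' \<in> \<Gamma> (lbl e1) \<longrightarrow> \<Gamma> (lbl e3) \<subseteq> R (AField l' s) \<Longrightarrow>
              \<Gamma> (lbl e1) \<subseteq> \<Gamma> l \<Longrightarrow> acc \<Gamma> R (L (Write e1 e2 e3) l)"
| acc_del:   "acc \<Gamma> R e1 \<Longrightarrow> acc \<Gamma> R e2 \<Longrightarrow> \<Gamma> (lbl e1) \<subseteq> \<Gamma> l \<Longrightarrow>
              acc \<Gamma> R (L (Del e1 e2) l)"
| acc_mark:  "acc \<Gamma> R e \<Longrightarrow> \<Gamma> (lbl e) \<subseteq> \<Gamma> l \<Longrightarrow> acc \<Gamma> R (L (Mark mk e) l)"
| acc_env_I: "\<forall>x v. fmlookup \<rho> x = Some v \<longrightarrow> acc \<Gamma> R v \<and> \<Gamma> (lbl v) \<subseteq> R (AVar x) \<Longrightarrow>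
              acc_env \<Gamma> R \<rho>"
| ap_const:  "approx \<Gamma> R (abs_const k) (Const k)"
| ap_fun:    "approx \<Gamma> R (FUN x e) (Fun x e)"
| ap_box:    "approx \<Gamma> R (BOX e) (Box e)"
| ap_rec:    "\<forall>p\<in>set fs. \<exists>\<nu>\<in>R (AField l' (fst p)). approx \<Gamma> R \<nu> (trm_of (snd p)) \<Longrightarrow>
              approx \<Gamma> R (REC l') (Rec fs)"
| ap_step:   "approx \<Gamma> R \<nu> t \<Longrightarrow> eval_step n (L t l) (L t' l) \<Longrightarrow> approx \<Gamma> R \<nu> t'"
| ap_clo:    "approx \<Gamma> R \<nu> t \<Longrightarrow> acc_env \<Gamma> R \<rho> \<Longrightarrow> approx \<Gamma> R \<nu> (Clo t \<rho>)"

end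

theory Submission imports Defs begin

lemma lbl_relabel[simp]: "lbl (relabel v l) = l" by (cases v) auto
lemma lbl_clo[simp]: "lbl (clo \<rho> e) = lbl e" by (cases e) auto

lemma tl_lbl: "tl_red n e e' \<Longrightarrow> n > 0 \<Longrightarrow> lbl e' = lbl e"
  by (induct rule: tl_red.induct) auto

lemma ctx_lbl: "ctx_red m n e e' \<Longrightarrow> m > 0 \<Longrightarrow> lbl e' = lbl e"
  by (induct rule: ctx_red.induct) (auto dest: tl_lbl)

inductive shF :: "name \<Rightarrow> 'l \<Rightarrow> ('l,'m) trm \<Rightarrow> bool" where
  "shF x (lbl e) (Fun x e)"
| "shF x l t \<Longrightarrow> shF x l (Clo t \<rho>)"

inductive shB :: "'l \<Rightarrow> ('l,'m) trm \<Rightarrow> bool" where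
  "shB (lbl e) (Box e)"
| "shB l t \<Longrightarrow> shB l (Clo t \<rho>)"

lemma shF_funI: "lbl e = l \<Longrightarrow> shF x l (Fun x e)" using shF.intros(1) by metis
lemma shB_boxI: "lbl e = l \<Longrightarrow> shB l (Box e)" using shB.intros(1) by metis
lemma abs_const_ne[simp]: "abs_const k \<noteq> FUN x e" "abs_const k \<noteq> BOX e" by (cases k; simp)+

inductive_cases tlFun: "tl_red n (L (Fun x e) l) e'"
inductive_cases tlBox: "tl_red n (L (Box e) l) e'"
inductive_cases tlCloFun: "tl_red n (L (Clo (Fun x e) \<rho>) l) e'"
inductive_cases tlCloBox: "tl_red n (L (Clo (Box e) \<rho>) l) e'"
inductive_cases tlCloClo: "tl_red n (L (Clo (Clo t \<rho>1) \<rho>) l) e'"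
inductive_cases ctxFun: "ctx_red m n (L (Fun x e) l) e'"
inductive_cases ctxBox: "ctx_red m n (L (Box e) l) e'"
inductive_cases ctxClo: "ctx_red m n (L (Clo t \<rho>) l) e'"

lemma shF_step: "shF x l0 t \<Longrightarrow> ctx_red m n (L t l) e' \<Longrightarrow> shF x l0 (trm_of e')"
proof (induct arbitrary: m n l e' rule: shF.induct)
  case (1 e x)
  from 1 show ?case
    by (elim ctxFun tlFun) (auto dest: ctx_lbl intro: shF_funI)
next
  case (2 x l t \<rho>)
  show ?case
  proof -
    from 2(3) have "tl_red n (L (Clo t \<rho>) l) e'" by (elim ctxClo) auto
    with 2(1) show ?thesis
      by (cases rule: shF.cases) (auto elim!: tlCloFun tlCloClo intro!: shF_funI)
  qed
qed

lemma shB_step: "shB l0 t \<Longrightarrow> ctx_red m n (L t l) e' \<Longrightarrow> shB l0 (trm_of e')"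
proof (induct arbitrary: m n l e' rule: shB.induct)
  case (1 e)
  from 1 show ?case
    by (elim ctxBox tlBox) (auto dest: ctx_lbl intro: shB_boxI)
next
  case (2 l t \<rho>)
  show ?case
  proof -
    from 2(3) have "tl_red n (L (Clo t \<rho>) l) e'" by (elim ctxClo) auto
    with 2(1) show ?thesis
      by (cases rule: shB.cases) (auto elim!: tlCloBox tlCloClo intro!: shB_boxI)
  qed
qed

inductive shO :: "('l,'m) trm \<Rightarrow> bool" where
  "shO (Const k)"
| "shO (Rec fs)"
| "shO t \<Longrightarrow> shO (Clo t \<rho>)"

inductive_cases tlConst: "tl_red n (L (Const k) l) e'"
inductive_cases tlRec: "tl_red n (L (Rec fs) l) e'"
inductive_cases tlCloConst: "tl_red n (L (Clo (Const k) \<rho>) l) e'"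
inductive_cases tlCloRec: "tl_red n (L (Clo (Rec fs) \<rho>) l) e'"
inductive_cases ctxConst: "ctx_red m n (L (Const k) l) e'"
inductive_cases ctxRec: "ctx_red m n (L (Rec fs) l) e'"

lemma shO_step: "shO t \<Longrightarrow> ctx_red m n (L t l) e' \<Longrightarrow> shO (trm_of e')"
proof (induct arbitrary: m n l e' rule: shO.induct)
  case (1 k)
  from 1 show ?case by (elim ctxConst tlConst)
next
  case (2 fs)
  from 2 show ?case by (elim ctxRec tlRec) (auto intro: shO.intros)
next
  case (3 t \<rho>)
  show ?case
  proof -
    from 3(3) have "tl_red n (L (Clo t \<rho>) l) e'" by (elim ctxClo) auto
    with 3(1) show ?thesis
      by (cases rule: shO.cases) (auto elim!: tlCloConst tlCloRec tlCloClo intro: shO.intros)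
  qed
qed

definition shape :: "('l,'m) absval \<Rightarrow> ('l,'m) trm \<Rightarrow> bool" where
  "shape \<nu> t = ((\<forall>x e0. \<nu> = FUN x e0 \<longrightarrow> shF x (lbl e0) t) \<and> (\<forall>e0. \<nu> = BOX e0 \<longrightarrow> shB (lbl e0) t)
     \<and> ((\<forall>x e0. \<nu> \<noteq> FUN x e0) \<and> (\<forall>e0. \<nu> \<noteq> BOX e0) \<longrightarrow> shO t))"

lemma approx_shape:
  "acc \<Gamma> R e \<Longrightarrow> True"
  "acc_env \<Gamma> R \<rho> \<Longrightarrow> True"
  "approx \<Gamma> R \<nu> t \<Longrightarrow> shape \<nu> t"
proof (induct rule: acc_acc_env_approx.inducts)
  case (ap_step \<nu> t n l t')
  then obtain k where k: "ctx_red n k (L t l) (L t' l)" unfolding eval_step_def by blast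
  show ?case unfolding shape_def
  proof (intro conjI allI impI)
    fix x e0 assume "\<nu> = FUN x e0"
    then show "shF x (lbl e0) t'" using ap_step(2) shF_step[OF _ k] unfolding shape_def by force
  next
    fix e0 assume "\<nu> = BOX e0"
    then show "shB (lbl e0) t'" using ap_step(2) shB_step[OF _ k] unfolding shape_def by force
  next
    assume "(\<forall>x e0. \<nu> \<noteq> FUN x e0) \<and> (\<forall>e0. \<nu> \<noteq> BOX e0)"
    then show "shO t'" using ap_step(2) shO_step[OF _ k] unfolding shape_def by force
  qed
next
  case (ap_const k) then show ?case by (cases k) (auto simp: shape_def intro: shO.intros)
next
  case (ap_rec fs l') then show ?case by (simp add: shape_def shO.intros)
next
  case (ap_fun x e) then show ?case by (simp add: shape_def shF.intros)
next
  case (ap_box e) then show ?case by (simp add: shape_def shB.intros)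
next
  case (ap_clo \<nu> t \<rho>) then show ?case by (simp add: shape_def shF.intros shB.intros shO.intros)
qed simp_all

inductive_cases shF_Fun: "shF x l (Fun y e)"
inductive_cases shB_Fun: "shB l (Fun y e)"
inductive_cases shO_Fun: "shO (Fun y e)"
inductive_cases shF_Box: "shF x l (Box e)"
inductive_cases shB_Box: "shB l (Box e)"
inductive_cases shO_Box: "shO (Box e)"

lemma approx_Fun: "approx \<Gamma> R \<nu> (Fun x e) \<Longrightarrow> \<exists>e0. \<nu> = FUN x e0 \<and> lbl e0 = lbl e"
  apply (drule approx_shape(3))
  apply (cases \<nu>)
  apply (auto simp: shape_def elim: shF_Fun shB_Fun shO_Fun)
  done

lemma approx_Box: "approx \<Gamma> R \<nu> (Box e) \<Longrightarrow> \<exists>e0. \<nu> = BOX e0 \<and> lbl e0 = lbl e"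
  apply (drule approx_shape(3))
  apply (cases \<nu>)
  apply (auto simp: shape_def elim: shF_Box shB_Box shO_Box)
  done

lemma approx_fun_clo: "approx \<Gamma> R \<nu> (Fun x e) \<Longrightarrow> acc_env \<Gamma> R \<rho> \<Longrightarrow> approx \<Gamma> R \<nu> (Fun x (clo \<rho> e))"
  apply (rule ap_step[where n="Suc 0" and t="Clo (Fun x e) \<rho>" and l=undefined])
   apply (erule (1) ap_clo)
  unfolding eval_step_def by (blast intro: c_hole ep_fun)

lemma approx_box_clo: "approx \<Gamma> R \<nu> (Box e) \<Longrightarrow> acc_env \<Gamma> R \<rho> \<Longrightarrow> approx \<Gamma> R \<nu> (Box (clo \<rho> e))"
  apply (rule ap_step[where n="0" and t="Clo (Box e) \<rho>" and l=undefined])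
   apply (erule (1) ap_clo)
  unfolding eval_step_def by (blast intro: c_hole ep_box)

lemma proto_trans: "l'' \<in> proto R l' \<Longrightarrow> l' \<in> proto R l0 \<Longrightarrow> l'' \<in> proto R l0"
  by (induct rule: proto.induct) (auto intro: proto.intros)

lemma acc_relbl:
  "acc \<Gamma> R e \<Longrightarrow> (\<And>l'. \<Gamma> (lbl e) \<subseteq> \<Gamma> l' \<Longrightarrow> acc \<Gamma> R (L (trm_of e) l'))"
  "acc_env \<Gamma> R \<rho> \<Longrightarrow> True"
  "approx \<Gamma> R \<nu> t \<Longrightarrow> True"
proof (induct rule: acc_acc_env_approx.inducts)
qed (fastforce intro!: acc_acc_env_approx.intros(1-15))+

lemma acc_relabel: "acc \<Gamma> R v \<Longrightarrow> \<Gamma> (lbl v) \<subseteq> \<Gamma> l \<Longrightarrow> acc \<Gamma> R (relabel v l)"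
  by (cases v) (use acc_relbl(1) in fastforce)

inductive_cases accConst: "acc \<Gamma> R (L (Const k) l)"
inductive_cases accVar: "acc \<Gamma> R (L (Var x) l)"
inductive_cases accRec: "acc \<Gamma> R (L (Rec fs) l)"
inductive_cases accFun: "acc \<Gamma> R (L (Fun x e) l)"
inductive_cases accApp: "acc \<Gamma> R (L (App e1 e2) l)"
inductive_cases accBox: "acc \<Gamma> R (L (Box e) l)"
inductive_cases accUnbox: "acc \<Gamma> R (L (Unbox e) l)"
inductive_cases accRun: "acc \<Gamma> R (L (Run e) l)"
inductive_cases accRunIn: "acc \<Gamma> R (L (RunIn e \<rho>) l)"
inductive_cases accIf: "acc \<Gamma> R (L (If e1 e2 e3) l)"
inductive_cases accClo: "acc \<Gamma> R (L (Clo t \<rho>) l)"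
inductive_cases accRead: "acc \<Gamma> R (L (Read e1 e2) l)"
inductive_cases accWrite: "acc \<Gamma> R (L (Write e1 e2 e3) l)"
inductive_cases accDel: "acc \<Gamma> R (L (Del e1 e2) l)"
inductive_cases accMark: "acc \<Gamma> R (L (Mark m e) l)"
inductive_cases accEnv: "acc_env \<Gamma> R \<rho>"

lemma acc_clo_e: "acc \<Gamma> R e \<Longrightarrow> acc_env \<Gamma> R \<rho> \<Longrightarrow> acc \<Gamma> R (clo \<rho> e)"
  by (cases e) (auto intro: acc_clo)

lemma tl_pres: "tl_red n e e' \<Longrightarrow> acc \<Gamma> R e \<Longrightarrow> acc \<Gamma> R e' \<and> \<Gamma> (lbl e') \<subseteq> \<Gamma> (lbl e)"
proof (induct rule: tl_red.induct)
  case ep_const then show ?case by (auto elim!: accClo accConst accVar accRec accFun accApp accBox accUnbox accRun accRunIn accIf accRead accWrite accDel accMark intro!: acc_acc_env_approx.intros(1-15) acc_clo_e intro: approx_fun_clo approx_box_clo) ((blast|fastforce)+)?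
next
  case (ep_rec n fs \<rho> l')
  from ep_rec obtain l'' where env: "acc_env \<Gamma> R \<rho>" and a: "\<forall>p\<in>set fs. acc \<Gamma> R (snd p)"
    and r: "REC l'' \<in> \<Gamma> l'" and f: "\<forall>p\<in>set fs. \<Gamma> (lbl (snd p)) \<subseteq> R (AField l'' (fst p))"
    by (auto elim!: accClo accRec)
  have "acc \<Gamma> R (L (Rec (map (\<lambda>(s, e). (s, clo \<rho> e)) fs)) l')"
    using a f env r by (intro acc_rec[where l'=l'']) (fastforce intro: acc_clo_e)+
  then show ?case by simp
next
  case ep_var then show ?case by (auto elim!: accClo accConst accVar accRec accFun accApp accBox accUnbox accRun accRunIn accIf accRead accWrite accDel accMark intro!: acc_acc_env_approx.intros(1-15) acc_clo_e intro: approx_fun_clo approx_box_clo) ((blast|fastforce)+)?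
next
  case ep_fun then show ?case by (auto elim!: accClo accConst accVar accRec accFun accApp accBox accUnbox accRun accRunIn accIf accRead accWrite accDel accMark intro!: acc_acc_env_approx.intros(1-15) acc_clo_e intro: approx_fun_clo approx_box_clo) ((blast|fastforce)+)?
next
  case ep_app then show ?case by (auto elim!: accClo accConst accVar accRec accFun accApp accBox accUnbox accRun accRunIn accIf accRead accWrite accDel accMark intro!: acc_acc_env_approx.intros(1-15) acc_clo_e intro: approx_fun_clo approx_box_clo) ((blast|fastforce)+)?
next
  case ep_box then show ?case by (auto elim!: accClo accConst accVar accRec accFun accApp accBox accUnbox accRun accRunIn accIf accRead accWrite accDel accMark intro!: acc_acc_env_approx.intros(1-15) acc_clo_e intro: approx_fun_clo approx_box_clo) ((blast|fastforce)+)?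
next
  case ep_unbox then show ?case by (auto elim!: accClo accConst accVar accRec accFun accApp accBox accUnbox accRun accRunIn accIf accRead accWrite accDel accMark intro!: acc_acc_env_approx.intros(1-15) acc_clo_e intro: approx_fun_clo approx_box_clo) ((blast|fastforce)+)?
next
  case ep_run0 then show ?case by (auto elim!: accClo accConst accVar accRec accFun accApp accBox accUnbox accRun accRunIn accIf accRead accWrite accDel accMark intro!: acc_acc_env_approx.intros(1-15) acc_clo_e intro: approx_fun_clo approx_box_clo) ((blast|fastforce)+)?
next
  case ep_runS then show ?case by (auto elim!: accClo accConst accVar accRec accFun accApp accBox accUnbox accRun accRunIn accIf accRead accWrite accDel accMark intro!: acc_acc_env_approx.intros(1-15) acc_clo_e intro: approx_fun_clo approx_box_clo) ((blast|fastforce)+)?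
next
  case ep_if then show ?case by (auto elim!: accClo accConst accVar accRec accFun accApp accBox accUnbox accRun accRunIn accIf accRead accWrite accDel accMark intro!: acc_acc_env_approx.intros(1-15) acc_clo_e intro: approx_fun_clo approx_box_clo) ((blast|fastforce)+)?
next
  case ep_read then show ?case by (auto elim!: accClo accConst accVar accRec accFun accApp accBox accUnbox accRun accRunIn accIf accRead accWrite accDel accMark intro!: acc_acc_env_approx.intros(1-15) acc_clo_e intro: approx_fun_clo approx_box_clo) ((blast|fastforce)+)?
next
  case ep_write then show ?case by (auto elim!: accClo accConst accVar accRec accFun accApp accBox accUnbox accRun accRunIn accIf accRead accWrite accDel accMark intro!: acc_acc_env_approx.intros(1-15) acc_clo_e intro: approx_fun_clo approx_box_clo) ((blast|fastforce)+)?
next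
  case ep_del then show ?case by (auto elim!: accClo accConst accVar accRec accFun accApp accBox accUnbox accRun accRunIn accIf accRead accWrite accDel accMark intro!: acc_acc_env_approx.intros(1-15) acc_clo_e intro: approx_fun_clo approx_box_clo) ((blast|fastforce)+)?
next
  case ep_mark then show ?case by (auto elim!: accClo accConst accVar accRec accFun accApp accBox accUnbox accRun accRunIn accIf accRead accWrite accDel accMark intro!: acc_acc_env_approx.intros(1-15) acc_clo_e intro: approx_fun_clo approx_box_clo) ((blast|fastforce)+)?
next
  case (lookup_rule \<rho> x v l)
  from lookup_rule(3) have env: "acc_env \<Gamma> R \<rho>" and rx: "R (AVar x) \<subseteq> \<Gamma> l"
    by (auto elim!: accClo accVar)
  from env lookup_rule(1) have "acc \<Gamma> R v" "\<Gamma> (lbl v) \<subseteq> R (AVar x)" by (auto elim!: accEnv)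
  with rx show ?case by (auto intro: acc_relabel)
next
  case (app_rule v x t l1 \<rho> l2 l3)
  from app_rule(2) obtain \<nu> where av: "acc \<Gamma> R v" and at: "acc \<Gamma> R (L t l1)" and env: "acc_env \<Gamma> R \<rho>"
    and nu: "\<nu> \<in> \<Gamma> l2" and ap: "approx \<Gamma> R \<nu> (Fun x (L t l1))"
    and fa: "\<forall>x e3. FUN x e3 \<in> \<Gamma> l2 \<longrightarrow> \<Gamma> (lbl v) \<subseteq> R (AVar x) \<and> \<Gamma> (lbl e3) \<subseteq> \<Gamma> l3"
    by (auto elim!: accApp accClo accFun)
  from approx_Fun[OF ap] obtain e0 where "\<nu> = FUN x e0" "lbl e0 = l1" by auto
  with nu fa have s1: "\<Gamma> (lbl v) \<subseteq> R (AVar x)" and s2: "\<Gamma> l1 \<subseteq> \<Gamma> l3" by metis+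
  have "acc_env \<Gamma> R (fmupd x v \<rho>)"
    using env av s1 by (auto elim!: accEnv intro!: acc_env_I split: if_splits) blast+
  with at s2 show ?case by (auto intro: acc_clo)
next
  case (unbox_rule v l1 l2)
  from unbox_rule(2) obtain \<nu> where av: "acc \<Gamma> R v" and nu: "\<nu> \<in> \<Gamma> l1" and ap: "approx \<Gamma> R \<nu> (Box v)"
    and fa: "\<forall>e'. BOX e' \<in> \<Gamma> l1 \<longrightarrow> \<Gamma> (lbl e') \<subseteq> \<Gamma> l2"
    by (auto elim!: accUnbox accBox)
  from approx_Box[OF ap] obtain e0 where "\<nu> = BOX e0" "lbl e0 = lbl v" by auto
  with nu fa have "\<Gamma> (lbl v) \<subseteq> \<Gamma> l2" by metis
  with av show ?case by (auto intro: acc_relabel)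
next
  case (run_rule v l1 \<rho> l2)
  from run_rule(2) obtain \<nu> where av: "acc \<Gamma> R v" and nu: "\<nu> \<in> \<Gamma> l1" and ap: "approx \<Gamma> R \<nu> (Box v)"
    and fa: "\<forall>e'. BOX e' \<in> \<Gamma> l1 \<longrightarrow> \<Gamma> (lbl e') \<subseteq> \<Gamma> l2" and env: "acc_env \<Gamma> R \<rho>"
    by (auto elim!: accRunIn accBox)
  from approx_Box[OF ap] obtain e0 where "\<nu> = BOX e0" "lbl e0 = lbl v" by auto
  with nu fa have "\<Gamma> (lbl v) \<subseteq> \<Gamma> l2" by metis
  with av have "acc \<Gamma> R (L (trm_of v) l2)" by (rule acc_relbl(1))
  with env show ?case by (auto intro: acc_clo)
next
  case if_true then show ?case by (auto elim!: accClo accConst accVar accRec accFun accApp accBox accUnbox accRun accRunIn accIf accRead accWrite accDel accMark intro!: acc_acc_env_approx.intros(1-15) acc_clo_e intro: approx_fun_clo approx_box_clo) ((blast|fastforce)+)?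
next
  case if_false then show ?case by (auto elim!: accClo accConst accVar accRec accFun accApp accBox accUnbox accRun accRunIn accIf accRead accWrite accDel accMark intro!: acc_acc_env_approx.intros(1-15) acc_clo_e intro: approx_fun_clo approx_box_clo) ((blast|fastforce)+)?
next
  case (read1 fs1 si vi fs2 l1 l2 l3)
  from read1(2) obtain l' where av: "acc \<Gamma> R vi" and r: "REC l' \<in> \<Gamma> l1"
    and f: "\<Gamma> (lbl vi) \<subseteq> R (AField l' si)"
    and fa: "\<forall>l'. REC l' \<in> \<Gamma> l1 \<longrightarrow> (\<forall>s. \<forall>l''\<in>proto R l'. R (AField l'' s) \<subseteq> \<Gamma> l3)"
    by (auto elim!: accRead accRec)
  from fa r have "R (AField l' si) \<subseteq> \<Gamma> l3" by (auto intro: proto.intros)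
  with f av show ?case by (auto intro: acc_relabel)
next
  case (read2 fs1 fs' l1' fs2 l1 sx l2 l3)
  from read2(3) obtain l' where ar: "acc \<Gamma> R (L (Rec fs') l1')" and r: "REC l' \<in> \<Gamma> l1"
    and f: "\<Gamma> l1' \<subseteq> R (AField l' proto_str)"
    and fa: "\<forall>l'. REC l' \<in> \<Gamma> l1 \<longrightarrow> (\<forall>s. \<forall>l''\<in>proto R l'. R (AField l'' s) \<subseteq> \<Gamma> l3)"
    and u: "UNDEF \<in> \<Gamma> l3" and ac: "acc \<Gamma> R (L (Const (CStr sx)) l2)"
    by (auto elim!: accRead accRec)
  have "\<forall>l''. REC l'' \<in> \<Gamma> l1' \<longrightarrow> (\<forall>s. \<forall>l3'\<in>proto R l''. R (AField l3' s) \<subseteq> \<Gamma> l3)"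
  proof (intro allI impI ballI)
    fix l'' s l3' assume a: "REC l'' \<in> \<Gamma> l1'" "l3' \<in> proto R l''"
    have "l'' \<in> proto R l'" using a(1) f by (auto intro: proto.intros)
    with a(2) have "l3' \<in> proto R l'" by (rule proto_trans)
    then show "R (AField l3' s) \<subseteq> \<Gamma> l3" using fa r by auto
  qed
  with ar ac u show ?case by (auto intro!: acc_read) blast+
next
  case read3 then show ?case by (auto elim!: accClo accConst accVar accRec accFun accApp accBox accUnbox accRun accRunIn accIf accRead accWrite accDel accMark intro!: acc_acc_env_approx.intros(1-15) acc_clo_e intro: approx_fun_clo approx_box_clo) ((blast|fastforce)+)?
next
  case (write1 fs1 si vi fs2 l1 vi' l2 l3)
  from write1(3) obtain l' where a: "\<forall>p\<in>set (fs1 @ [(si, vi)] @ fs2). acc \<Gamma> R (snd p)"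
    and r: "REC l' \<in> \<Gamma> l1" and f: "\<forall>p\<in>set (fs1 @ [(si, vi)] @ fs2). \<Gamma> (lbl (snd p)) \<subseteq> R (AField l' (fst p))"
    and av: "acc \<Gamma> R vi'" and w: "\<forall>s l'. REC l' \<in> \<Gamma> l1 \<longrightarrow> \<Gamma> (lbl vi') \<subseteq> R (AField l' s)"
    and sub: "\<Gamma> l1 \<subseteq> \<Gamma> l3"
    by (elim accWrite accRec) auto
  have "acc \<Gamma> R (L (Rec (fs1 @ [(si, vi')] @ fs2)) l3)"
  proof (rule acc_rec[where l'=l'])
    show "\<forall>p\<in>set (fs1 @ [(si, vi')] @ fs2). acc \<Gamma> R (snd p)" using a av by auto
    show "REC l' \<in> \<Gamma> l3" using r sub by auto
    show "\<forall>p\<in>set (fs1 @ [(si, vi')] @ fs2). \<Gamma> (lbl (snd p)) \<subseteq> R (AField l' (fst p))"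
      using f w r by auto
  qed
  then show ?case by simp
next
  case (write2 fs l1 vx sx l2 l3)
  from write2(4) obtain l' where a: "\<forall>p\<in>set fs. acc \<Gamma> R (snd p)"
    and r: "REC l' \<in> \<Gamma> l1" and f: "\<forall>p\<in>set fs. \<Gamma> (lbl (snd p)) \<subseteq> R (AField l' (fst p))"
    and av: "acc \<Gamma> R vx" and w: "\<forall>s l'. REC l' \<in> \<Gamma> l1 \<longrightarrow> \<Gamma> (lbl vx) \<subseteq> R (AField l' s)"
    and sub: "\<Gamma> l1 \<subseteq> \<Gamma> l3"
    by (elim accWrite accRec) auto
  have "acc \<Gamma> R (L (Rec (fs @ [(sx, vx)])) l3)"
  proof (rule acc_rec[where l'=l'])
    show "\<forall>p\<in>set (fs @ [(sx, vx)]). acc \<Gamma> R (snd p)" using a av by auto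
    show "REC l' \<in> \<Gamma> l3" using r sub by auto
    show "\<forall>p\<in>set (fs @ [(sx, vx)]). \<Gamma> (lbl (snd p)) \<subseteq> R (AField l' (fst p))"
      using f w r by auto
  qed
  then show ?case by simp
next
  case (del1 fs1 si vi fs2 l1 l2 l3)
  from del1(2) obtain l' where a: "\<forall>p\<in>set (fs1 @ [(si, vi)] @ fs2). acc \<Gamma> R (snd p)"
    and r: "REC l' \<in> \<Gamma> l1" and f: "\<forall>p\<in>set (fs1 @ [(si, vi)] @ fs2). \<Gamma> (lbl (snd p)) \<subseteq> R (AField l' (fst p))"
    and sub: "\<Gamma> l1 \<subseteq> \<Gamma> l3"
    by (elim accDel accRec) auto
  have "acc \<Gamma> R (L (Rec (fs1 @ fs2)) l3)"
  proof (rule acc_rec[where l'=l'])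
    show "\<forall>p\<in>set (fs1 @ fs2). acc \<Gamma> R (snd p)" using a by auto
    show "REC l' \<in> \<Gamma> l3" using r sub by auto
    show "\<forall>p\<in>set (fs1 @ fs2). \<Gamma> (lbl (snd p)) \<subseteq> R (AField l' (fst p))"
      using f by auto
  qed
  then show ?case by simp
next
  case (del2 fs l1 sx l2 l3)
  from del2(3) obtain l' where a: "\<forall>p\<in>set fs. acc \<Gamma> R (snd p)"
    and r: "REC l' \<in> \<Gamma> l1" and f: "\<forall>p\<in>set fs. \<Gamma> (lbl (snd p)) \<subseteq> R (AField l' (fst p))"
    and sub: "\<Gamma> l1 \<subseteq> \<Gamma> l3"
    by (elim accDel accRec) auto
  have "acc \<Gamma> R (L (Rec fs) l3)"
    using a r sub f by (intro acc_rec[where l'=l']) auto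
  then show ?case by simp
next
  case lift_app then show ?case by (auto elim!: accClo accConst accVar accRec accFun accApp accBox accUnbox accRun accRunIn accIf accRead accWrite accDel accMark intro!: acc_acc_env_approx.intros(1-15) acc_clo_e intro: approx_fun_clo approx_box_clo) ((blast|fastforce)+)?
next
  case lift_if then show ?case by (auto elim!: accClo accConst accVar accRec accFun accApp accBox accUnbox accRun accRunIn accIf accRead accWrite accDel accMark intro!: acc_acc_env_approx.intros(1-15) acc_clo_e intro: approx_fun_clo approx_box_clo) ((blast|fastforce)+)?
next
  case lift_unbox then show ?case by (auto elim!: accClo accConst accVar accRec accFun accApp accBox accUnbox accRun accRunIn accIf accRead accWrite accDel accMark intro!: acc_acc_env_approx.intros(1-15) acc_clo_e intro: approx_fun_clo approx_box_clo) ((blast|fastforce)+)?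
next
  case lift_run then show ?case by (auto elim!: accClo accConst accVar accRec accFun accApp accBox accUnbox accRun accRunIn accIf accRead accWrite accDel accMark intro!: acc_acc_env_approx.intros(1-15) acc_clo_e intro: approx_fun_clo approx_box_clo) ((blast|fastforce)+)?
next
  case lift_read1 then show ?case by (auto elim!: accClo accConst accVar accRec accFun accApp accBox accUnbox accRun accRunIn accIf accRead accWrite accDel accMark intro!: acc_acc_env_approx.intros(1-15) acc_clo_e intro: approx_fun_clo approx_box_clo) ((blast|fastforce)+)?
next
  case lift_read2 then show ?case by (auto elim!: accClo accConst accVar accRec accFun accApp accBox accUnbox accRun accRunIn accIf accRead accWrite accDel accMark intro!: acc_acc_env_approx.intros(1-15) acc_clo_e intro: approx_fun_clo approx_box_clo) ((blast|fastforce)+)?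
next
  case lift_write1 then show ?case by (auto elim!: accClo accConst accVar accRec accFun accApp accBox accUnbox accRun accRunIn accIf accRead accWrite accDel accMark intro!: acc_acc_env_approx.intros(1-15) acc_clo_e intro: approx_fun_clo approx_box_clo) ((blast|fastforce)+)?
next
  case lift_write2 then show ?case by (auto elim!: accClo accConst accVar accRec accFun accApp accBox accUnbox accRun accRunIn accIf accRead accWrite accDel accMark intro!: acc_acc_env_approx.intros(1-15) acc_clo_e intro: approx_fun_clo approx_box_clo) ((blast|fastforce)+)?
next
  case lift_del1 then show ?case by (auto elim!: accClo accConst accVar accRec accFun accApp accBox accUnbox accRun accRunIn accIf accRead accWrite accDel accMark intro!: acc_acc_env_approx.intros(1-15) acc_clo_e intro: approx_fun_clo approx_box_clo) ((blast|fastforce)+)?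
next
  case lift_del2 then show ?case by (auto elim!: accClo accConst accVar accRec accFun accApp accBox accUnbox accRun accRunIn accIf accRead accWrite accDel accMark intro!: acc_acc_env_approx.intros(1-15) acc_clo_e intro: approx_fun_clo approx_box_clo) ((blast|fastforce)+)?
qed

lemma ctx_pres: "ctx_red m n e e' \<Longrightarrow> acc \<Gamma> R e \<Longrightarrow> acc \<Gamma> R e' \<and> \<Gamma> (lbl e') \<subseteq> \<Gamma> (lbl e)"
proof (induct rule: ctx_red.induct)
  case (c_hole n e e')
  then show ?case by (rule tl_pres)
next
  case (c_rec vs m n e e' s es l)
  from c_rec(4) obtain l' where a: "\<forall>p\<in>set (vs @ [(s, e)] @ es). acc \<Gamma> R (snd p)"
    and r: "REC l' \<in> \<Gamma> l" and f: "\<forall>p\<in>set (vs @ [(s, e)] @ es). \<Gamma> (lbl (snd p)) \<subseteq> R (AField l' (fst p))"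
    by (elim accRec) auto
  from a c_rec(3) have ih: "acc \<Gamma> R e'" "\<Gamma> (lbl e') \<subseteq> \<Gamma> (lbl e)" by auto
  have "acc \<Gamma> R (L (Rec (vs @ [(s, e')] @ es)) l)"
  proof (rule acc_rec[where l'=l'])
    show "\<forall>p\<in>set (vs @ [(s, e')] @ es). acc \<Gamma> R (snd p)" using a ih by auto
    show "REC l' \<in> \<Gamma> l" using r by auto
    show "\<forall>p\<in>set (vs @ [(s, e')] @ es). \<Gamma> (lbl (snd p)) \<subseteq> R (AField l' (fst p))"
      using f ih by auto
  qed
  then show ?case by simp
next
  case (c_fun m n e e' x l)
  from c_fun(3) obtain \<nu> where a: "acc \<Gamma> R e" and nu: "\<nu> \<in> \<Gamma> l" and ap: "approx \<Gamma> R \<nu> (Fun x e)"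
    by (elim accFun) auto
  from c_fun(1) have c: "ctx_red (Suc m) n (L (Fun x e) l) (L (Fun x e') l)" by (rule ctx_red.c_fun)
  have "approx \<Gamma> R \<nu> (Fun x e')"
    by (rule ap_step[OF ap]) (use c in \<open>auto simp: eval_step_def\<close>)
  with c_fun(2)[OF a] nu show ?case by (auto intro: acc_fun)
next
  case (c_box m n e e' l)
  from c_box(3) obtain \<nu> where a: "acc \<Gamma> R e" and nu: "\<nu> \<in> \<Gamma> l" and ap: "approx \<Gamma> R \<nu> (Box e)"
    by (elim accBox) auto
  from c_box(1) have c: "ctx_red m n (L (Box e) l) (L (Box e') l)" by (rule ctx_red.c_box)
  have "approx \<Gamma> R \<nu> (Box e')"
    by (rule ap_step[OF ap]) (use c in \<open>auto simp: eval_step_def\<close>)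
  with c_box(2)[OF a] nu show ?case by (auto intro: acc_box)
next
  case c_app1 then show ?case by (auto elim!: accClo accConst accVar accRec accFun accApp accBox accUnbox accRun accRunIn accIf accRead accWrite accDel accMark intro!: acc_acc_env_approx.intros(1-15)) ((blast|fastforce)+)?
next
  case c_app2 then show ?case by (auto elim!: accClo accConst accVar accRec accFun accApp accBox accUnbox accRun accRunIn accIf accRead accWrite accDel accMark intro!: acc_acc_env_approx.intros(1-15)) ((blast|fastforce)+)?
next
  case c_unbox then show ?case by (auto elim!: accClo accConst accVar accRec accFun accApp accBox accUnbox accRun accRunIn accIf accRead accWrite accDel accMark intro!: acc_acc_env_approx.intros(1-15)) ((blast|fastforce)+)?
next
  case c_run then show ?case by (auto elim!: accClo accConst accVar accRec accFun accApp accBox accUnbox accRun accRunIn accIf accRead accWrite accDel accMark intro!: acc_acc_env_approx.intros(1-15)) ((blast|fastforce)+)?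
next
  case c_if1 then show ?case by (auto elim!: accClo accConst accVar accRec accFun accApp accBox accUnbox accRun accRunIn accIf accRead accWrite accDel accMark intro!: acc_acc_env_approx.intros(1-15)) ((blast|fastforce)+)?
next
  case c_if2 then show ?case by (auto elim!: accClo accConst accVar accRec accFun accApp accBox accUnbox accRun accRunIn accIf accRead accWrite accDel accMark intro!: acc_acc_env_approx.intros(1-15)) ((blast|fastforce)+)?
next
  case c_if3 then show ?case by (auto elim!: accClo accConst accVar accRec accFun accApp accBox accUnbox accRun accRunIn accIf accRead accWrite accDel accMark intro!: acc_acc_env_approx.intros(1-15)) ((blast|fastforce)+)?
next
  case c_read1 then show ?case by (auto elim!: accClo accConst accVar accRec accFun accApp accBox accUnbox accRun accRunIn accIf accRead accWrite accDel accMark intro!: acc_acc_env_approx.intros(1-15)) ((blast|fastforce)+)?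
next
  case c_read2 then show ?case by (auto elim!: accClo accConst accVar accRec accFun accApp accBox accUnbox accRun accRunIn accIf accRead accWrite accDel accMark intro!: acc_acc_env_approx.intros(1-15)) ((blast|fastforce)+)?
next
  case c_write1 then show ?case by (auto elim!: accClo accConst accVar accRec accFun accApp accBox accUnbox accRun accRunIn accIf accRead accWrite accDel accMark intro!: acc_acc_env_approx.intros(1-15)) ((blast|fastforce)+)?
next
  case c_write2 then show ?case by (auto elim!: accClo accConst accVar accRec accFun accApp accBox accUnbox accRun accRunIn accIf accRead accWrite accDel accMark intro!: acc_acc_env_approx.intros(1-15)) ((blast|fastforce)+)?
next
  case c_write3 then show ?case by (auto elim!: accClo accConst accVar accRec accFun accApp accBox accUnbox accRun accRunIn accIf accRead accWrite accDel accMark intro!: acc_acc_env_approx.intros(1-15)) ((blast|fastforce)+)?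
next
  case c_del1 then show ?case by (auto elim!: accClo accConst accVar accRec accFun accApp accBox accUnbox accRun accRunIn accIf accRead accWrite accDel accMark intro!: acc_acc_env_approx.intros(1-15)) ((blast|fastforce)+)?
next
  case c_del2 then show ?case by (auto elim!: accClo accConst accVar accRec accFun accApp accBox accUnbox accRun accRunIn accIf accRead accWrite accDel accMark intro!: acc_acc_env_approx.intros(1-15)) ((blast|fastforce)+)?
next
  case c_runin then show ?case by (auto elim!: accClo accConst accVar accRec accFun accApp accBox accUnbox accRun accRunIn accIf accRead accWrite accDel accMark intro!: acc_acc_env_approx.intros(1-15)) ((blast|fastforce)+)?
next
  case c_mark then show ?case by (auto elim!: accClo accConst accVar accRec accFun accApp accBox accUnbox accRun accRunIn accIf accRead accWrite accDel accMark intro!: acc_acc_env_approx.intros(1-15)) ((blast|fastforce)+)?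
qed

theorem theorem2:
  fixes \<Gamma> :: "('l, 'm) cache" and R :: "('l, 'm) aenv"
    and e e' :: "('l, 'm) expr" and n :: nat
  assumes "acc \<Gamma> R e"
    and "eval_step n e e'"
  shows "acc \<Gamma> R e'"
  using assms ctx_pres unfolding eval_step_def by blast

end
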